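(* For every integer $n \geq 3$, the chromatic number of the Kneser graph of triangulations of a convex $n$-gon satisfies \[\chi(\mathrm{KG}(\mathcal{T}_n)) = n-2.\]
   Context: Label the vertices of a convex $n$-gon by $1,2,\dots,n$ in cyclic order. Let $\mathrm{Diag}_n = \{\{i,j\} \subseteq [n] : i-j \not\equiv \pm 1 \pmod n\}$ be the set of diagonals. Two diagonals cross if they meet in the interior of the polygon (equivalently, their endpoints are four distinct labels that interleave in the cyclic order). A triangulation is identified with the set of its diagonals (a maximal set of pairwise noncrossing diagonals, of size $n-3$), and $\mathcal{T}_n$ denotes the set of all triangulations. For a finite set system $\mathcal{F}$, the Kneser graph $\mathrm{KG}(\mathcal{F})$ has vertex set $\mathcal{F}$, with $F, F'$ adjacent iff $F \cap F' = \emptyset$. Thus two triangulations are adjacent iff they share no diagonal. *)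

theory Defs
  imports Main
begin

text \<open>Vertices of the convex n-gon are labelled 1..n in cyclic order.
  A diagonal is a 2-subset {i,j} of {1..n} with i - j not congruent to +1 or -1 mod n.\<close>
definition Diag :: "nat \<Rightarrow> nat set set" where
  "Diag n = {{i, j} | i j. i \<in> {1..n} \<and> j \<in> {1..n} \<and> i \<noteq> j \<and>
      (int i - int j) mod int n \<noteq> 1 \<and> (int j - int i) mod int n \<noteq> 1}"

text \<open>Two diagonals cross iff their endpoints are four distinct labels interleaving
  in the cyclic order (equivalently in the linear order of the labels 1..n).\<close>
definition crosses :: "nat set \<Rightarrow> nat set \<Rightarrow> bool" where
  "crosses d e \<longleftrightarrow> (\<exists>a b c x. ((d = {a, b} \<and> e = {c, x}) \<or> (d = {c, x} \<and> e = {a, b}))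
      \<and> a < c \<and> c < b \<and> b < x)"

definition triangulation :: "nat \<Rightarrow> nat set set \<Rightarrow> bool" where
  "triangulation n T \<longleftrightarrow> T \<subseteq> Diag n
      \<and> (\<forall>d\<in>T. \<forall>e\<in>T. \<not> crosses d e)
      \<and> (\<forall>d\<in>Diag n - T. \<exists>e\<in>T. crosses d e)"

definition Triangs :: "nat \<Rightarrow> nat set set set" where
  "Triangs n = {T. triangulation n T}"

definition kneser_adj :: "'a set \<Rightarrow> 'a set \<Rightarrow> bool" where
  "kneser_adj F G \<longleftrightarrow> F \<noteq> G \<and> F \<inter> G = {}"

definition chromatic_number :: "'v set \<Rightarrow> ('v \<Rightarrow> 'v \<Rightarrow> bool) \<Rightarrow> nat" where
  "chromatic_number V adj = (LEAST k. \<exists>f :: 'v \<Rightarrow> nat.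
      (\<forall>x\<in>V. f x < k) \<and> (\<forall>x\<in>V. \<forall>y\<in>V. adj x y \<longrightarrow> f x \<noteq> f y))"

end

theory Submission
  imports Defs
begin


definition dg :: "nat \<Rightarrow> nat \<Rightarrow> nat \<Rightarrow> bool" where
  "dg n i j \<longleftrightarrow> 1 \<le> i \<and> i + 2 \<le> j \<and> j \<le> n \<and> \<not> (i = 1 \<and> j = n)"

lemma neg_mod: fixes t n :: int assumes "0 < t" "t < n" shows "(- t) mod n = n - t"
proof -
  have e0: "(n - t) mod n = (-t + n) mod n" by (simp add: algebra_simps)
  have e1: "(-t + n) mod n = (-t) mod n" by (rule mod_add_self2)
  have e2: "(n - t) mod n = n - t" by (rule mod_pos_pos_trivial) (use assms in auto)
  show ?thesis using e0 e1 e2 by metis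
qed

lemma Diag_iff: "d \<in> Diag n \<longleftrightarrow> (\<exists>i j. d = {i,j} \<and> dg n i j)"
proof
  assume "d \<in> Diag n"
  then obtain i j where d: "d = {i,j}" and ij: "i \<in> {1..n}" "j \<in> {1..n}" "i \<noteq> j"
    and m1: "(int i - int j) mod int n \<noteq> 1" and m2: "(int j - int i) mod int n \<noteq> 1"
    unfolding Diag_def by blast
  have key: "dg n a b" if "a < b" "a \<in> {1..n}" "b \<in> {1..n}"
     "(int a - int b) mod int n \<noteq> 1" "(int b - int a) mod int n \<noteq> 1" for a b
  proof -
    have t: "0 < int b - int a" "int b - int a < int n" using that by auto
    have "(int b - int a) mod int n = int b - int a" using t by (simp add: mod_pos_pos_trivial)
    hence h1: "int b - int a \<noteq> 1" using that by simp
    have "(int a - int b) = - (int b - int a)" by simp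
    hence "(int a - int b) mod int n = int n - (int b - int a)" using neg_mod[OF t] by simp
    hence "int n - (int b - int a) \<noteq> 1" using that by simp
    then show ?thesis using h1 that unfolding dg_def by auto
  qed
  show "\<exists>i j. d = {i,j} \<and> dg n i j"
  proof (cases "i < j")
    case True thus ?thesis using key[of i j] d ij m1 m2 by auto
  next
    case False hence "j < i" using ij by auto
    thus ?thesis using key[of j i] d ij m1 m2 by (auto simp: insert_commute)
  qed
next
  assume "\<exists>i j. d = {i,j} \<and> dg n i j"
  then obtain i j where d: "d = {i,j}" and g: "dg n i j" by blast
  have t: "0 < int j - int i" "int j - int i < int n" using g unfolding dg_def by auto
  have "(int j - int i) mod int n = int j - int i" using t by (simp add: mod_pos_pos_trivial)
  hence m2: "(int j - int i) mod int n \<noteq> 1" using g unfolding dg_def by auto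
  have "(int i - int j) = - (int j - int i)" by simp
  hence "(int i - int j) mod int n = int n - (int j - int i)" using neg_mod[OF t] by simp
  hence m1: "(int i - int j) mod int n \<noteq> 1" using g unfolding dg_def by auto
  have "i \<in> {1..n}" "j \<in> {1..n}" "i \<noteq> j" using g unfolding dg_def by auto
  thus "d \<in> Diag n" unfolding Diag_def using d m1 m2 by blast
qed

lemma crosses_iff: assumes "i < j" "k < l"
  shows "crosses {i,j} {k,l} \<longleftrightarrow> (i < k \<and> k < j \<and> j < l) \<or> (k < i \<and> i < l \<and> l < j)"
proof
  assume "crosses {i,j} {k,l}"
  then obtain a b c x where h: "({i,j}={a,b} \<and> {k,l}={c,x}) \<or> ({i,j}={c,x} \<and> {k,l}={a,b})"
    "a<c" "c<b" "b<x" unfolding crosses_def by blast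
  from h(1) show "(i < k \<and> k < j \<and> j < l) \<or> (k < i \<and> i < l \<and> l < j)"
  proof
    assume "{i,j}={a,b} \<and> {k,l}={c,x}"
    then have "i=a \<and> j=b" "k=c \<and> l=x" using assms h by (auto simp: doubleton_eq_iff)
    thus ?thesis using h by auto
  next
    assume "{i,j}={c,x} \<and> {k,l}={a,b}"
    then have "i=c \<and> j=x" "k=a \<and> l=b" using assms h by (auto simp: doubleton_eq_iff)
    thus ?thesis using h by auto
  qed
next
  assume "(i < k \<and> k < j \<and> j < l) \<or> (k < i \<and> i < l \<and> l < j)"
  thus "crosses {i,j} {k,l}" unfolding crosses_def by blast
qed

lemma crosses_sym: "crosses d e \<Longrightarrow> crosses e d" unfolding crosses_def by blast

lemma dg_lt: "dg n i j \<Longrightarrow> i < j" unfolding dg_def by auto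

lemma tri_sub: "triangulation n T \<Longrightarrow> e \<in> T \<Longrightarrow> \<exists>k l. e = {k,l} \<and> dg n k l"
  unfolding triangulation_def using Diag_iff by blast

lemma tri_nc: "triangulation n T \<Longrightarrow> d \<in> T \<Longrightarrow> e \<in> T \<Longrightarrow> \<not> crosses d e"
  unfolding triangulation_def by blast

lemma tri_max: assumes "triangulation n T" "dg n i j" "{i,j} \<notin> T"
  shows "\<exists>k l. {k,l} \<in> T \<and> dg n k l \<and> crosses {i,j} {k,l}"
proof -
  have "{i,j} \<in> Diag n - T" using assms Diag_iff by blast
  then obtain e where "e \<in> T" "crosses {i,j} e" using assms(1) unfolding triangulation_def by blast
  thus ?thesis using tri_sub[OF assms(1)] by blast
qed

lemma pair_mem: assumes "triangulation n T" "{a,b} \<in> T" "a < b" shows "dg n a b"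
proof -
  obtain k l where kl: "{a,b} = {k,l}" "dg n k l" using tri_sub[OF assms(1,2)] by blast
  have "k < l" using dg_lt[OF kl(2)] .
  then show ?thesis using kl assms(3) by (auto simp: doubleton_eq_iff)
qed

lemma pair_mem': assumes "triangulation n T" "{a,b} \<in> T" "b < a" shows "dg n b a"
  using pair_mem[OF assms(1) _ assms(3)] assms(2) by (simp add: insert_commute)

lemma dg_mono: "dg n i j \<Longrightarrow> dg (Suc n) i j" unfolding dg_def by auto



definition ymin :: "nat \<Rightarrow> nat set set \<Rightarrow> nat" where
  "ymin n T = (LEAST x. 2 \<le> x \<and> ({x,n} \<in> T \<or> x = n - 1))"

definition Amap :: "nat \<Rightarrow> nat set set \<Rightarrow> nat set set" where
  "Amap n T = insert {ymin n T, Suc n} T"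
definition Bmap :: "nat \<Rightarrow> nat set set \<Rightarrow> nat set set" where
  "Bmap n T = insert {1, n} T"
definition Wfan :: "nat \<Rightarrow> nat set set" where
  "Wfan n = {{x, Suc n} | x. 2 \<le> x \<and> x \<le> n - 1}"

lemma nbr_n: assumes "triangulation n T" "{x,n} \<in> T" shows "2 \<le> x \<and> x + 2 \<le> n"
proof (cases "x < n")
  case True thus ?thesis using pair_mem[OF assms True] unfolding dg_def by auto
next
  case False
  hence "n < x \<or> x = n" by auto
  thus ?thesis
  proof
    assume "n < x" thus ?thesis using pair_mem'[OF assms] unfolding dg_def by auto
  next
    assume "x = n" thus ?thesis using tri_sub[OF assms] unfolding dg_def
      by (auto simp: doubleton_eq_iff)
  qed
qed

lemma ymin_props:
  assumes T: "triangulation n T" and n: "n \<ge> 3"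
  shows "2 \<le> ymin n T" "ymin n T \<le> n - 1" "ymin n T < n - 1 \<Longrightarrow> {ymin n T, n} \<in> T"
    "\<And>x. {x,n} \<in> T \<Longrightarrow> ymin n T \<le> x"
proof -
  let ?P = "\<lambda>x. 2 \<le> x \<and> ({x,n} \<in> T \<or> x = n - 1)"
  have P1: "?P (n-1)" using n by auto
  have Py: "?P (ymin n T)" unfolding ymin_def by (rule LeastI[of ?P, OF P1])
  show "2 \<le> ymin n T" using Py by auto
  show "ymin n T \<le> n - 1" unfolding ymin_def by (rule Least_le[of ?P, OF P1])
  show "ymin n T < n - 1 \<Longrightarrow> {ymin n T, n} \<in> T" using Py by auto
  fix x assume "{x,n} \<in> T"
  hence "?P x" using nbr_n[OF T] by auto
  thus "ymin n T \<le> x" unfolding ymin_def by (rule Least_le)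
qed

lemma one_y:
  assumes T: "triangulation n T" and n: "n \<ge> 3" and y3: "3 \<le> ymin n T"
  shows "{1, ymin n T} \<in> T"
proof (rule ccontr)
  let ?y = "ymin n T"
  note yp = ymin_props[OF T n]
  assume nin: "{1, ?y} \<notin> T"
  have "dg n 1 ?y" using y3 yp(2) n unfolding dg_def by auto
  then obtain k l where kl: "{k,l} \<in> T" "dg n k l" "crosses {1,?y} {k,l}"
    using tri_max[OF T _ nin] by blast
  have kl2: "k < l" "l \<le> n" "1 \<le> k" using kl(2) unfolding dg_def by auto
  have c: "1 < k \<and> k < ?y \<and> ?y < l" using kl(3) crosses_iff[of 1 ?y k l] kl2 y3 by auto
  show False
  proof (cases "l = n")
    case True
    then have "?y \<le> k" using yp(4) kl(1) by auto
    thus False using c by auto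
  next
    case False
    hence "?y < n - 1" using c kl2 by auto
    hence yn: "{?y, n} \<in> T" using yp(3) by auto
    have "crosses {k,l} {?y,n}" using crosses_iff[of k l ?y n] c kl2 False by auto
    thus False using tri_nc[OF T kl(1) yn] by auto
  qed
qed

lemma y_nocross:
  assumes T: "triangulation n T" and n: "n \<ge> 3" and e: "e \<in> T"
  shows "\<not> crosses {ymin n T, Suc n} e"
proof
  let ?y = "ymin n T"
  note yp = ymin_props[OF T n]
  assume cr: "crosses {?y, Suc n} e"
  obtain k l where kl: "e = {k,l}" "dg n k l" using tri_sub[OF T e] by blast
  have kl2: "k < l" "l \<le> n" "1 \<le> k" using kl(2) unfolding dg_def by auto
  have "?y < Suc n" using yp n by auto
  hence c: "k < ?y \<and> ?y < l" using cr kl crosses_iff[of ?y "Suc n" k l] kl2 by auto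
  show False
  proof (cases "l = n")
    case True
    then have "?y \<le> k" using yp(4) kl e by auto
    thus False using c by auto
  next
    case False
    hence "?y < n - 1" using c kl2 by auto
    hence yn: "{?y, n} \<in> T" using yp(3) by auto
    have "crosses {k,l} {?y,n}" using crosses_iff[of k l ?y n] c kl2 False by auto
    thus False using tri_nc[OF T _ yn] e kl by auto
  qed
qed

lemma tri_subset_le: "triangulation n T \<Longrightarrow> d \<in> T \<Longrightarrow> d \<subseteq> {1..n}"
  using tri_sub unfolding dg_def by fastforce

lemma Amap_tri: assumes T: "triangulation n T" and n: "n \<ge> 3"
  shows "triangulation (Suc n) (Amap n T)"
proof -
  let ?y = "ymin n T"
  note yp = ymin_props[OF T n]
  have sub: "Amap n T \<subseteq> Diag (Suc n)"
  proof
    fix d assume "d \<in> Amap n T"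
    then consider "d = {?y, Suc n}" | "d \<in> T" unfolding Amap_def by auto
    thus "d \<in> Diag (Suc n)"
    proof cases
      case 1 have "dg (Suc n) ?y (Suc n)" using yp n unfolding dg_def by auto
      thus ?thesis using 1 Diag_iff by blast
    next
      case 2 thus ?thesis using tri_sub[OF T] dg_mono Diag_iff by blast
    qed
  qed
  have selfnc: "\<not> crosses {?y, Suc n} {?y, Suc n}"
    using crosses_iff[of ?y "Suc n" ?y "Suc n"] yp n by auto
  have nc: "\<forall>d\<in>Amap n T. \<forall>e\<in>Amap n T. \<not> crosses d e"
    unfolding Amap_def using selfnc y_nocross[OF T n] tri_nc[OF T] crosses_sym by blast
  have mx: "\<forall>d\<in>Diag (Suc n) - Amap n T. \<exists>e\<in>Amap n T. crosses d e"
  proof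
    fix d assume d: "d \<in> Diag (Suc n) - Amap n T"
    then obtain i j where ij: "d = {i,j}" "dg (Suc n) i j" using Diag_iff by blast
    have dnot: "d \<notin> T" "d \<noteq> {?y, Suc n}" using d unfolding Amap_def by auto
    show "\<exists>e\<in>Amap n T. crosses d e"
    proof (cases "j \<le> n")
      case True
      show ?thesis
      proof (cases "i = 1 \<and> j = n")
        case True
        have "crosses {1,n} {?y, Suc n}" using crosses_iff[of 1 n ?y "Suc n"] yp n by auto
        thus ?thesis using True ij unfolding Amap_def by auto
      next
        case False
        hence "dg n i j" using ij \<open>j \<le> n\<close> unfolding dg_def by auto
        then obtain k l where "{k,l} \<in> T" "crosses {i,j} {k,l}"
          using tri_max[OF T] dnot ij by blast
        thus ?thesis using ij unfolding Amap_def by auto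
      qed
    next
      case False
      hence j: "j = Suc n" using ij unfolding dg_def by auto
      hence i: "2 \<le> i" "i \<le> n - 1" using ij unfolding dg_def by auto
      have "i \<noteq> ?y" using dnot ij j by auto
      hence "i < ?y \<or> ?y < i" by auto
      thus ?thesis
      proof
        assume "i < ?y"
        hence "{1, ?y} \<in> T" using one_y[OF T n] i by auto
        moreover have "crosses {i, Suc n} {1, ?y}"
          using crosses_iff[of i "Suc n" 1 ?y] \<open>i < ?y\<close> i yp n by auto
        ultimately show ?thesis using ij j unfolding Amap_def by auto
      next
        assume "?y < i"
        hence "{?y, n} \<in> T" using yp(3) i by auto
        moreover have "crosses {i, Suc n} {?y, n}"
          using crosses_iff[of i "Suc n" ?y n] \<open>?y < i\<close> i yp n by auto
        ultimately show ?thesis using ij j unfolding Amap_def by auto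
      qed
    qed
  qed
  show ?thesis unfolding triangulation_def using sub nc mx by blast
qed

lemma Bmap_tri: assumes T: "triangulation n T" and n: "n \<ge> 3"
  shows "triangulation (Suc n) (Bmap n T)"
proof -
  have sub: "Bmap n T \<subseteq> Diag (Suc n)"
  proof
    fix d assume "d \<in> Bmap n T"
    then consider "d = {1, n}" | "d \<in> T" unfolding Bmap_def by auto
    thus "d \<in> Diag (Suc n)"
    proof cases
      case 1 have "dg (Suc n) 1 n" using n unfolding dg_def by auto
      thus ?thesis using 1 Diag_iff by blast
    next
      case 2 thus ?thesis using tri_sub[OF T] dg_mono Diag_iff by blast
    qed
  qed
  have selfnc: "\<not> crosses {1, n} {1, n}" using crosses_iff[of 1 n 1 n] n by auto
  have nc1: "\<not> crosses {1, n} e" if eT: "e \<in> T" for e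
  proof -
    obtain k l where kl: "e = {k,l}" "dg n k l" using tri_sub[OF T eT] by blast
    thus ?thesis using crosses_iff[of 1 n k l] n unfolding dg_def by auto
  qed
  have nc: "\<forall>d\<in>Bmap n T. \<forall>e\<in>Bmap n T. \<not> crosses d e"
    unfolding Bmap_def using selfnc nc1 tri_nc[OF T] crosses_sym by blast
  have mx: "\<forall>d\<in>Diag (Suc n) - Bmap n T. \<exists>e\<in>Bmap n T. crosses d e"
  proof
    fix d assume d: "d \<in> Diag (Suc n) - Bmap n T"
    then obtain i j where ij: "d = {i,j}" "dg (Suc n) i j" using Diag_iff by blast
    have dnot: "d \<notin> T" "d \<noteq> {1, n}" using d unfolding Bmap_def by auto
    show "\<exists>e\<in>Bmap n T. crosses d e"
    proof (cases "j \<le> n")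
      case True
      hence "dg n i j" using ij dnot unfolding dg_def by auto
      then obtain k l where "{k,l} \<in> T" "crosses {i,j} {k,l}"
        using tri_max[OF T] dnot ij by blast
      thus ?thesis using ij unfolding Bmap_def by auto
    next
      case False
      hence j: "j = Suc n" using ij unfolding dg_def by auto
      hence i: "2 \<le> i" "i \<le> n - 1" using ij unfolding dg_def by auto
      have "crosses {i, Suc n} {1, n}" using crosses_iff[of i "Suc n" 1 n] i n by auto
      thus ?thesis using ij j unfolding Bmap_def by auto
    qed
  qed
  show ?thesis unfolding triangulation_def using sub nc mx by blast
qed

lemma Wfan_tri: assumes n: "n \<ge> 3" shows "triangulation (Suc n) (Wfan n)"
proof -
  have sub: "Wfan n \<subseteq> Diag (Suc n)"
  proof
    fix d assume "d \<in> Wfan n"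
    then obtain x where x: "d = {x, Suc n}" "2 \<le> x" "x \<le> n - 1" unfolding Wfan_def by auto
    have "dg (Suc n) x (Suc n)" using x n unfolding dg_def by auto
    thus "d \<in> Diag (Suc n)" using x Diag_iff by blast
  qed
  have nc: "\<forall>d\<in>Wfan n. \<forall>e\<in>Wfan n. \<not> crosses d e"
  proof (intro ballI)
    fix d e assume "d \<in> Wfan n" "e \<in> Wfan n"
    then obtain x z where "d = {x, Suc n}" "e = {z, Suc n}" "x \<le> n - 1" "z \<le> n - 1"
      unfolding Wfan_def by auto
    thus "\<not> crosses d e" using crosses_iff[of x "Suc n" z "Suc n"] n by auto
  qed
  have mx: "\<forall>d\<in>Diag (Suc n) - Wfan n. \<exists>e\<in>Wfan n. crosses d e"
  proof
    fix d assume d: "d \<in> Diag (Suc n) - Wfan n"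
    then obtain i j where ij: "d = {i,j}" "dg (Suc n) i j" using Diag_iff by blast
    show "\<exists>e\<in>Wfan n. crosses d e"
    proof (cases "j \<le> n")
      case True
      have "{Suc i, Suc n} \<in> Wfan n" using ij True unfolding Wfan_def dg_def by auto
      moreover have "crosses {i,j} {Suc i, Suc n}"
        using crosses_iff[of i j "Suc i" "Suc n"] ij True unfolding dg_def by auto
      ultimately show ?thesis using ij by auto
    next
      case False
      hence "j = Suc n" using ij unfolding dg_def by auto
      hence "d \<in> Wfan n" using ij unfolding Wfan_def dg_def by auto
      thus ?thesis using d by auto
    qed
  qed
  show ?thesis unfolding triangulation_def using sub nc mx by blast
qed



lemma Diag3: "Diag 3 = {}" using Diag_iff unfolding dg_def by auto

lemma tri3: "triangulation 3 {}" unfolding triangulation_def Diag3 by auto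

lemma tri3_empty: "triangulation 3 T \<Longrightarrow> T = {}" unfolding triangulation_def Diag3 by auto

lemma deg0: assumes T: "triangulation n T" and n: "n \<ge> 4" and no: "\<forall>x. {x,n} \<notin> T"
  shows "{1, n-1} \<in> T"
proof (rule ccontr)
  assume nin: "{1, n-1} \<notin> T"
  have "dg n 1 (n-1)" using n unfolding dg_def by auto
  then obtain k l where kl: "{k,l} \<in> T" "dg n k l" "crosses {1,n-1} {k,l}"
    using tri_max[OF T _ nin] by blast
  have kl2: "k < l" "l \<le> n" "1 \<le> k" using kl(2) unfolding dg_def by auto
  have "1 < k \<and> k < n-1 \<and> n-1 < l" using kl(3) crosses_iff[of 1 "n-1" k l] kl2 n by auto
  hence "l = n" using kl2 by auto
  thus False using no kl(1) by auto
qed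

lemma deg0': assumes T: "triangulation n T" and n: "n \<ge> 4" and no: "\<forall>x. {1,x} \<notin> T"
  shows "{2, n} \<in> T"
proof (rule ccontr)
  assume nin: "{2, n} \<notin> T"
  have "dg n 2 n" using n unfolding dg_def by auto
  then obtain k l where kl: "{k,l} \<in> T" "dg n k l" "crosses {2,n} {k,l}"
    using tri_max[OF T _ nin] by blast
  have kl2: "k < l" "l \<le> n" "1 \<le> k" using kl(2) unfolding dg_def by auto
  have "k < 2" using kl(3) crosses_iff[of 2 n k l] kl2 n by auto
  hence "k = 1" using kl2 by auto
  thus False using no kl(1) by auto
qed

lemma not_1n: assumes T: "triangulation n T" shows "{1,n} \<notin> T"
proof
  assume h: "{1,n} \<in> T"
  then obtain k l where "{1,n} = {k,l}" "dg n k l" using tri_sub[OF T] by blast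
  thus False unfolding dg_def by (auto simp: doubleton_eq_iff)
qed

lemma A_hom: assumes T: "triangulation n T" and T': "triangulation n T'" and n: "n \<ge> 3"
  and ne: "T \<noteq> T'" and dj: "T \<inter> T' = {}"
  shows "Amap n T \<inter> Amap n T' = {}"
proof -
  note yp = ymin_props[OF T n] and yp' = ymin_props[OF T' n]
  have sT: "{x, Suc n} \<notin> T" for x using tri_subset_le[OF T] by fastforce
  have sT': "{x, Suc n} \<notin> T'" for x using tri_subset_le[OF T'] by fastforce
  have "ymin n T \<noteq> ymin n T'"
  proof
    assume eq: "ymin n T = ymin n T'"
    show False
    proof (cases "ymin n T < n - 1")
      case True
      thus False using yp(3) yp'(3) eq dj by auto
    next
      case False
      hence y: "ymin n T = n - 1" using yp by auto
      have no: "\<forall>x. {x,n} \<notin> T" using yp(4) nbr_n[OF T] y by fastforce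
      have no': "\<forall>x. {x,n} \<notin> T'" using yp'(4) nbr_n[OF T'] y eq by fastforce
      show False
      proof (cases "n = 3")
        case True thus False using tri3_empty T T' ne by auto
      next
        case False
        hence n4: "n \<ge> 4" using n by auto
        have "{1, n-1} \<in> T" by (rule deg0[OF T n4 no])
        moreover have "{1, n-1} \<in> T'" by (rule deg0[OF T' n4 no'])
        ultimately show False using dj by blast
      qed
    qed
  qed
  thus ?thesis unfolding Amap_def using dj sT sT' by (auto simp: doubleton_eq_iff)
qed

lemma BA_disj: assumes T: "triangulation n T" and T': "triangulation n T'" and dj: "T \<inter> T' = {}" and n: "n \<ge> 3"
  shows "Bmap n T \<inter> Amap n T' = {}"
proof -
  have sT: "{x, Suc n} \<notin> T" for x using tri_subset_le[OF T] by fastforce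
  show ?thesis unfolding Amap_def Bmap_def using dj sT not_1n[OF T'] n by (auto simp: doubleton_eq_iff)
qed

lemma WB_disj: assumes T: "triangulation n T" shows "Wfan n \<inter> Bmap n T = {}"
proof -
  have sT: "{x, Suc n} \<notin> T" for x using tri_subset_le[OF T] by fastforce
  show ?thesis unfolding Wfan_def Bmap_def using sT by (auto simp: doubleton_eq_iff)
qed

lemma adj_intro: "X \<inter> Y = {} \<Longrightarrow> X \<noteq> {} \<Longrightarrow> kneser_adj X Y"
  unfolding kneser_adj_def by auto

lemma lower:
  assumes "n \<ge> 3" "\<forall>x\<in>Triangs n. f x < k"
    "\<forall>x\<in>Triangs n. \<forall>y\<in>Triangs n. kneser_adj x y \<longrightarrow> f x \<noteq> f y"
  shows "n - 2 \<le> k"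
  using assms
proof (induction n arbitrary: f k rule: nat_induct_at_least)
  case base
  have "{} \<in> Triangs 3" using tri3 unfolding Triangs_def by auto
  hence "f {} < k" using base by blast
  thus ?case by simp
next
  case (Suc n)
  have n: "n \<ge> 3" using Suc by auto
  have fk: "\<And>x. x \<in> Triangs (Suc n) \<Longrightarrow> f x < k" using Suc.prems(1) by blast
  have fp: "\<And>x y. x \<in> Triangs (Suc n) \<Longrightarrow> y \<in> Triangs (Suc n) \<Longrightarrow> kneser_adj x y \<Longrightarrow> f x \<noteq> f y"
    using Suc.prems(2) by blast
  have W: "Wfan n \<in> Triangs (Suc n)" using Wfan_tri[OF n] unfolding Triangs_def by auto
  define w where "w = f (Wfan n)"
  have wk: "w < k" using fk[OF W] unfolding w_def .
  have AT: "Amap n T \<in> Triangs (Suc n)" if "T \<in> Triangs n" for T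
    using Amap_tri[OF _ n] that unfolding Triangs_def by auto
  have BT: "Bmap n T \<in> Triangs (Suc n)" if "T \<in> Triangs n" for T
    using Bmap_tri[OF _ n] that unfolding Triangs_def by auto
  have Ane: "Amap n T \<noteq> {}" for T unfolding Amap_def by auto
  have Bne: "Bmap n T \<noteq> {}" for T unfolding Bmap_def by auto
  define v where "v T = (if f (Amap n T) = w then f (Bmap n T) else f (Amap n T))" for T
  define g where "g T = (if w < v T then v T - 1 else v T)" for T
  have vprop: "v T < k \<and> v T \<noteq> w" if TT: "T \<in> Triangs n" for T
  proof -
    have t: "triangulation n T" using TT unfolding Triangs_def by auto
    have "kneser_adj (Bmap n T) (Wfan n)"
      using adj_intro[OF _ Bne] WB_disj[OF t] by blast
    hence "f (Bmap n T) \<noteq> w" using fp[OF BT[OF TT] W] unfolding w_def by blast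
    moreover have "f (Bmap n T) < k" using fk[OF BT[OF TT]] .
    moreover have "f (Amap n T) < k" using fk[OF AT[OF TT]] .
    ultimately show ?thesis unfolding v_def by auto
  qed
  have g1: "\<forall>x\<in>Triangs n. g x < k - 1"
  proof
    fix x assume "x \<in> Triangs n"
    from vprop[OF this] wk show "g x < k - 1" unfolding g_def by auto
  qed
  have g2: "\<forall>x\<in>Triangs n. \<forall>y\<in>Triangs n. kneser_adj x y \<longrightarrow> g x \<noteq> g y"
  proof (intro ballI impI)
    fix T T' assume TT: "T \<in> Triangs n" "T' \<in> Triangs n" and adj: "kneser_adj T T'"
    have t: "triangulation n T" "triangulation n T'" using TT unfolding Triangs_def by auto
    have ne: "T \<noteq> T'" and dj: "T \<inter> T' = {}" using adj unfolding kneser_adj_def by auto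
    have dj': "T' \<inter> T = {}" using dj by auto
    have aa: "f (Amap n T) \<noteq> f (Amap n T')"
      using fp[OF AT[OF TT(1)] AT[OF TT(2)] adj_intro[OF A_hom[OF t n ne dj] Ane]] .
    have ba: "f (Bmap n T) \<noteq> f (Amap n T')"
      using fp[OF BT[OF TT(1)] AT[OF TT(2)] adj_intro[OF BA_disj[OF t dj n] Bne]] .
    have ab: "f (Bmap n T') \<noteq> f (Amap n T)"
      using fp[OF BT[OF TT(2)] AT[OF TT(1)] adj_intro[OF BA_disj[OF t(2) t(1) dj' n] Bne]] .
    have "v T \<noteq> v T'" using aa ba ab unfolding v_def by auto
    thus "g T \<noteq> g T'" using vprop[OF TT(1)] vprop[OF TT(2)] unfolding g_def by auto
  qed
  have "n - 2 \<le> k - 1" using Suc.IH[OF g1 g2] .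
  thus ?case using wk by auto
qed

definition col :: "nat \<Rightarrow> nat set set \<Rightarrow> nat" where
  "col n T = (if \<exists>i. {1,i} \<in> T then (LEAST i. {1,i} \<in> T) - 3 else n - 3)"

lemma one_nbr: assumes T: "triangulation n T" and h: "{1,i} \<in> T" shows "3 \<le> i \<and> i + 1 \<le> n"
proof -
  obtain k l where "{1,i} = {k,l}" "dg n k l" using tri_sub[OF T h] by blast
  thus ?thesis unfolding dg_def by (auto simp: doubleton_eq_iff)
qed

lemma upper:
  assumes n: "n \<ge> 3"
  shows "(\<forall>x\<in>Triangs n. col n x < n - 2) \<and>
         (\<forall>x\<in>Triangs n. \<forall>y\<in>Triangs n. kneser_adj x y \<longrightarrow> col n x \<noteq> col n y)"
proof (intro conjI ballI impI)
  fix T assume "T \<in> Triangs n"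
  hence T: "triangulation n T" unfolding Triangs_def by auto
  show "col n T < n - 2"
  proof (cases "\<exists>i. {1,i} \<in> T")
    case True
    then obtain i where i: "{1,i} \<in> T" by blast
    have "{1, LEAST i. {1,i} \<in> T} \<in> T" using LeastI[of "\<lambda>i. {1,i} \<in> T", OF i] .
    hence "3 \<le> (LEAST i. {1,i} \<in> T) \<and> (LEAST i. {1,i} \<in> T) + 1 \<le> n" using one_nbr[OF T] by blast
    thus ?thesis using True unfolding col_def by auto
  next
    case False thus ?thesis using n unfolding col_def by auto
  qed
next
  fix T T' assume TT: "T \<in> Triangs n" "T' \<in> Triangs n" and adj: "kneser_adj T T'"
  have t: "triangulation n T" "triangulation n T'" using TT unfolding Triangs_def by auto
  have ne: "T \<noteq> T'" and dj: "T \<inter> T' = {}" using adj unfolding kneser_adj_def by auto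
  show "col n T \<noteq> col n T'"
  proof
    assume eq: "col n T = col n T'"
    show False
    proof (cases "\<exists>i. {1,i} \<in> T")
      case True
      then obtain i where i: "{1,i} \<in> T" by blast
      let ?m = "LEAST i. {1,i} \<in> T"
      have m: "{1, ?m} \<in> T" using LeastI[of "\<lambda>i. {1,i} \<in> T", OF i] .
      have mb: "3 \<le> ?m \<and> ?m + 1 \<le> n" using one_nbr[OF t(1) m] .
      show False
      proof (cases "\<exists>i. {1,i} \<in> T'")
        case True
        then obtain i' where i': "{1,i'} \<in> T'" by blast
        let ?m' = "LEAST i. {1,i} \<in> T'"
        have m': "{1, ?m'} \<in> T'" using LeastI[of "\<lambda>i. {1,i} \<in> T'", OF i'] .
        have mb': "3 \<le> ?m' \<and> ?m' + 1 \<le> n" using one_nbr[OF t(2) m'] .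
        have c1: "col n T = ?m - 3" using \<open>\<exists>i. {1,i} \<in> T\<close> unfolding col_def by simp
        have c2: "col n T' = ?m' - 3" using True unfolding col_def by simp
        have "?m = ?m'" using eq mb mb' c1 c2 by linarith
        thus False using m m' dj by auto
      next
        case False
        have c1: "col n T = ?m - 3" using \<open>\<exists>i. {1,i} \<in> T\<close> unfolding col_def by simp
        have c2: "col n T' = n - 3" using False unfolding col_def by simp
        show False using eq mb c1 c2 by linarith
      qed
    next
      case False
      show False
      proof (cases "\<exists>i. {1,i} \<in> T'")
        case True
        then obtain i' where i': "{1,i'} \<in> T'" by blast
        let ?m' = "LEAST i. {1,i} \<in> T'"
        have m': "{1, ?m'} \<in> T'" using LeastI[of "\<lambda>i. {1,i} \<in> T'", OF i'] .
        have mb': "3 \<le> ?m' \<and> ?m' + 1 \<le> n" using one_nbr[OF t(2) m'] .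
        have c1: "col n T' = ?m' - 3" using True unfolding col_def by simp
        have c2: "col n T = n - 3" using \<open>\<not>(\<exists>i. {1,i} \<in> T)\<close> unfolding col_def by simp
        show False using eq mb' c1 c2 by linarith
      next
        case F': False
        show False
        proof (cases "n = 3")
          case True thus False using tri3_empty t ne by auto
        next
          case nf: False
          hence n4: "n \<ge> 4" using n by auto
          have "{2, n} \<in> T" using deg0'[OF t(1) n4] False by blast
          moreover have "{2, n} \<in> T'" using deg0'[OF t(2) n4] F' by blast
          ultimately show False using dj by blast
        qed
      qed
    qed
  qed
qed

theorem theorem1p1:
  fixes n :: nat
  assumes "n \<ge> 3"
  shows "chromatic_number (Triangs n) kneser_adj = n - 2"
  unfolding chromatic_number_def
proof (rule Least_equality)
  show "\<exists>f :: nat set set \<Rightarrow> nat. (\<forall>x\<in>Triangs n. f x < n - 2) \<and>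
      (\<forall>x\<in>Triangs n. \<forall>y\<in>Triangs n. kneser_adj x y \<longrightarrow> f x \<noteq> f y)"
    using upper[OF assms] by blast
next
  fix k assume "\<exists>f :: nat set set \<Rightarrow> nat. (\<forall>x\<in>Triangs n. f x < k) \<and>
      (\<forall>x\<in>Triangs n. \<forall>y\<in>Triangs n. kneser_adj x y \<longrightarrow> f x \<noteq> f y)"
  then obtain f :: "nat set set \<Rightarrow> nat" where "\<forall>x\<in>Triangs n. f x < k"
      "\<forall>x\<in>Triangs n. \<forall>y\<in>Triangs n. kneser_adj x y \<longrightarrow> f x \<noteq> f y" by blast
  thus "n - 2 \<le> k" using lower[OF assms] by blast
qed


end
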